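(* Let $G$ be a graph with $m\ge1$ edges, let $k\ge 0$ and $0\le p\le m$ be integers, $\ell=m-p$, $\eta\ge1$, and $E=E(G,\eta)$ as in the context. If $G$ has a set $U\subseteq V(G)$ with $|U|\le k$ incident to at least $p$ edges, then there is a decision tree $T$ with $|T|=dep(T)\le k$ and $|O(T,E)|\le\ell\eta$.
   Context: Fix an ordering $e_1,\dots,e_m$ of $E(G)$. For a positive integer $\eta$, $E(G,\eta)$ has features $V(G)\cup\{d_0\}$ and, for each $r\in[\eta]$ and $i\in[m]$: a negative example with $d_0=2m(r-1)+2i-1$ and, for each $v\in V(G)$, value $1$ if $v$ is an endpoint of $e_i$ and $0$ otherwise; and a positive example with $d_0=2m(r-1)+2i$ and value $0$ on every vertex feature. A decision tree (DT) is a rooted tree whose test nodes $v$ carry a feature $f(v)$ and integer threshold $\lambda(v)$ (examples with $e(f(v))\le\lambda(v)$ go left, others right) and whose leaves are labeled positive or negative. $|T|$ = number of test nodes; $dep(T)$ = maximum number of test nodes on a root-to-leaf path. An example is an outlier for $T$ if it reaches a leaf with the opposite label; $O(T,E)$ is the set of outliers. *)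

theory Defs
  imports Main
begin

text \<open>A simple graph on a finite vertex set V, with edges given as a list
  es = [e_1,...,e_m] (the fixed ordering of E(G)); each edge is a 2-element
  subset of V and edges are pairwise distinct.\<close>
definition simple_graph :: "'v set \<Rightarrow> 'v set list \<Rightarrow> bool" where
  "simple_graph V es \<longleftrightarrow> finite V \<and> distinct es \<and>
     (\<forall>e\<in>set es. e \<subseteq> V \<and> card e = 2)"

text \<open>Features: Some v for a vertex feature v, None for the special feature d_0.
  An example is a pair (feature assignment, label); label True = positive.\<close>
type_synonym 'v example = "('v option \<Rightarrow> int) \<times> bool"

definition neg_ex :: "'v set list \<Rightarrow> nat \<Rightarrow> nat \<Rightarrow> 'v example" where
  "neg_ex es r i =
     ((\<lambda>f. case f of None \<Rightarrow> int (2 * length es * (r - 1) + 2 * i - 1)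
                   | Some v \<Rightarrow> (if v \<in> es ! (i - 1) then 1 else 0)), False)"

definition pos_ex :: "'v set list \<Rightarrow> nat \<Rightarrow> nat \<Rightarrow> 'v example" where
  "pos_ex es r i =
     ((\<lambda>f. case f of None \<Rightarrow> int (2 * length es * (r - 1) + 2 * i)
                   | Some v \<Rightarrow> 0), True)"

definition dataset :: "'v set list \<Rightarrow> nat \<Rightarrow> 'v example set" where
  "dataset es \<eta> =
     {neg_ex es r i | r i. r \<in> {1..\<eta>} \<and> i \<in> {1..length es}} \<union>
     {pos_ex es r i | r i. r \<in> {1..\<eta>} \<and> i \<in> {1..length es}}"

datatype 'f dtree = Leaf bool | Node 'f int "'f dtree" "'f dtree"

fun classify :: "'f dtree \<Rightarrow> ('f \<Rightarrow> int) \<Rightarrow> bool" where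
  "classify (Leaf b) x = b"
| "classify (Node f t l r) x = (if x f \<le> t then classify l x else classify r x)"

fun tsize :: "'f dtree \<Rightarrow> nat" where
  "tsize (Leaf b) = 0"
| "tsize (Node f t l r) = Suc (tsize l + tsize r)"

fun tdepth :: "'f dtree \<Rightarrow> nat" where
  "tdepth (Leaf b) = 0"
| "tdepth (Node f t l r) = Suc (max (tdepth l) (tdepth r))"

fun tfeatures :: "'f dtree \<Rightarrow> 'f set" where
  "tfeatures (Leaf b) = {}"
| "tfeatures (Node f t l r) = insert f (tfeatures l \<union> tfeatures r)"

definition outliers :: "'f dtree \<Rightarrow> (('f \<Rightarrow> int) \<times> bool) set \<Rightarrow> (('f \<Rightarrow> int) \<times> bool) set" where
  "outliers T E = {e \<in> E. classify T (fst e) \<noteq> snd e}"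

end

theory Submission
  imports Defs
begin

fun chain :: "'f list \<Rightarrow> 'f dtree" where
  "chain [] = Leaf True"
| "chain (u#us) = Node u 0 (chain us) (Leaf False)"

lemma chain_classify: "classify (chain xs) x = (\<forall>f\<in>set xs. x f \<le> 0)"
  by (induction xs) auto

lemma chain_size: "tsize (chain xs) = length xs" by (induction xs) auto
lemma chain_depth: "tdepth (chain xs) = length xs" by (induction xs) auto
lemma chain_feat: "tfeatures (chain xs) = set xs" by (induction xs) auto

theorem lemma1:
  fixes V :: "'v set" and es :: "'v set list" and k p \<eta> :: nat
  assumes "simple_graph V es"
    and "length es \<ge> 1"
    and "p \<le> length es"
    and "\<eta> \<ge> 1"
    and "\<exists>U. U \<subseteq> V \<and> card U \<le> k \<and>
            card {i. i < length es \<and> es ! i \<inter> U \<noteq> {}} \<ge> p"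
  shows "\<exists>T :: 'v option dtree.
           tfeatures T \<subseteq> insert None (Some ` V) \<and>
           tsize T = tdepth T \<and> tdepth T \<le> k \<and>
           card (outliers T (dataset es \<eta>)) \<le> (length es - p) * \<eta>"
proof -
  obtain U where U: "U \<subseteq> V" "card U \<le> k"
    "card {i. i < length es \<and> es ! i \<inter> U \<noteq> {}} \<ge> p" using assms(5) by blast
  have finV: "finite V" using assms(1) unfolding simple_graph_def by blast
  hence "finite U" using U(1) finite_subset by blast
  then obtain xs where xs: "set xs = U" "distinct xs" using finite_distinct_list by blast
  define T where "T = chain (map Some xs)"
  define m where "m = length es"
  define H where "H = {i. i < m \<and> es ! i \<inter> U \<noteq> {}}"
  define S where "S = {i \<in> {1..m}. es ! (i - 1) \<inter> U = {}}"
  have cls: "classify T x = (\<forall>v\<in>U. x (Some v) \<le> 0)" for x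
    unfolding T_def chain_classify using xs by auto
  have "outliers T (dataset es \<eta>) \<subseteq> (\<lambda>(r,i). neg_ex es r i) ` ({1..\<eta>} \<times> S)"
  proof
    fix e assume e: "e \<in> outliers T (dataset es \<eta>)"
    hence ed: "e \<in> dataset es \<eta>" and ne: "classify T (fst e) \<noteq> snd e"
      unfolding outliers_def by auto
    from ed consider (n) r i where "r \<in> {1..\<eta>}" "i \<in> {1..length es}" "e = neg_ex es r i"
      | (p) r i where "r \<in> {1..\<eta>}" "i \<in> {1..length es}" "e = pos_ex es r i"
      unfolding dataset_def by blast
    then show "e \<in> (\<lambda>(r,i). neg_ex es r i) ` ({1..\<eta>} \<times> S)"
    proof cases
      case n
      have "es ! (i - 1) \<inter> U = {}"
        using ne n(3) unfolding cls neg_ex_def by (auto split: if_splits)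
      then show ?thesis using n unfolding S_def m_def by force
    next
      case p
      then show ?thesis using ne unfolding cls pos_ex_def by auto
    qed
  qed
  hence "card (outliers T (dataset es \<eta>)) \<le> card ((\<lambda>(r,i). neg_ex es r i) ` ({1..\<eta>} \<times> S))"
    by (intro card_mono) (auto simp: S_def)
  also have "\<dots> \<le> card ({1..\<eta>} \<times> S)" by (rule card_image_le) (auto simp: S_def)
  also have "\<dots> = \<eta> * card S" by (simp add: card_cartesian_product)
  also have "card S \<le> m - p"
  proof -
    have "S = {1..m} - Suc ` H" unfolding S_def H_def
      proof (intro set_eqI iffI)
      fix i assume "i \<in> {i \<in> {1..m}. es ! (i - 1) \<inter> U = {}}"
      thus "i \<in> {1..m} - Suc ` {i. i < m \<and> es ! i \<inter> U \<noteq> {}}" by auto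
    next
      fix i assume i: "i \<in> {1..m} - Suc ` {i. i < m \<and> es ! i \<inter> U \<noteq> {}}"
      hence "i = Suc (i - 1)" "i - 1 < m" by auto
      with i show "i \<in> {i \<in> {1..m}. es ! (i - 1) \<inter> U = {}}" by (metis (mono_tags, lifting) DiffE image_eqI mem_Collect_eq DiffD1)
    qed
    moreover have "Suc ` H \<subseteq> {1..m}" unfolding H_def by auto
    ultimately have "card S = m - card H"
      by (simp add: card_Diff_subset card_image finite_subset H_def)
    moreover have "p \<le> card H" using U(3) unfolding H_def m_def by simp
    ultimately show ?thesis by simp
  qed
  hence "\<eta> * card S \<le> (length es - p) * \<eta>" unfolding m_def by (simp add: mult.commute)
  finally have out: "card (outliers T (dataset es \<eta>)) \<le> (length es - p) * \<eta>" .
  have "length xs = card U" using xs distinct_card by fastforce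
  moreover have "tfeatures T \<subseteq> insert None (Some ` V)"
    unfolding T_def chain_feat using xs U(1) by auto
  ultimately show ?thesis using out U(2)
    by (intro exI[of _ T]) (simp add: T_def chain_size chain_depth)
qed

end
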